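(* With the notation of the context, the following identities hold for all $(t,s)\in I\times I$, each whenever the Green's functions appearing in it exist: (i) $G_N[T](t,s)=G_P[2T](t,s)+G_P[2T](2T-t,s)$; (ii) $G_N[T](t,s)=G_N[2T](t,s)+G_N[2T](2T-t,s)$; (iii) $G_N[T](t,s)=G_P[4T](t,s)+G_P[4T](4T-t,s)+G_P[4T](2T-t,s)+G_P[4T](2T+t,s)$.
   Context: Fix $n\ge 1$, $T>0$, $I=[0,T]$, $J=[0,2T]$. $W^{2n,1}(K)$ denotes the set of $u\in C^{2n-1}(K)$ with $u^{(2n-1)}$ absolutely continuous on the interval $K$. Let $a_0,\dots,a_{2n-1}\in L^{\alpha}(I)$, $\alpha\ge1$, and $Lu=u^{(2n)}+\sum_{k=0}^{2n-1}a_ku^{(k)}$ on $I$. Define $\widetilde L u=u^{(2n)}+\sum_{k=0}^{n-1}(\hat a_{2k+1}u^{(2k+1)}+\tilde a_{2k}u^{(2k)})$ on $J$, where $\tilde a_{2k}=a_{2k}$ and $\hat a_{2k+1}=a_{2k+1}$ on $I$, and $\tilde a_{2k}(t)=a_{2k}(2T-t)$, $\hat a_{2k+1}(t)=-a_{2k+1}(2T-t)$ for $t\in(T,2T]$. Define $\widetilde{\widetilde L}$ on $[0,4T]$ by applying the same construction to $\widetilde L$ (coefficients of even-order derivatives extended evenly about $2T$, those of odd-order derivatives extended oddly about $2T$). An operator $M$ is nonresonant in a Banach space $X\subset W^{2n,1}(K)$ if $Mu=0$ a.e., $u\in X$, forces $u\equiv0$; then $Mu=\sigma$, $u\in X$ has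 for every $\sigma\in L^1(K)$ the unique solution $u(t)=\int_K G(t,s)\sigma(s)ds$, $G$ being the Green's function. Green's functions (each defined when the operator is nonresonant in the indicated space): $G_N[T]$ for $L$ on $X_{N,T}=\{u\in W^{2n,1}(I): u^{(2k+1)}(0)=u^{(2k+1)}(T)=0,\ k=0,\dots,n-1\}$; $G_P[2T]$ for $\widetilde L$ on $X_{P,2T}=\{u\in W^{2n,1}(J): u^{(k)}(0)=u^{(k)}(2T),\ k=0,\dots,2n-1\}$; $G_N[2T]$ for $\widetilde L$ on $X_{N,2T}=\{u\in W^{2n,1}(J): u^{(2k+1)}(0)=u^{(2k+1)}(2T)=0,\ k=0,\dots,n-1\}$; $G_P[4T]$ for $\widetilde{\widetilde L}$ on $\{u\in W^{2n,1}([0,4T]): u^{(k)}(0)=u^{(k)}(4T),\ k=0,\dots,2n-1\}$. *)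

theory Defs
  imports "HOL-Analysis.Analysis"
begin

definition abs_cont_on :: "real \<Rightarrow> real \<Rightarrow> (real \<Rightarrow> real) \<Rightarrow> bool" where
  "abs_cont_on lo hi f \<longleftrightarrow>
     (\<forall>\<epsilon>>0. \<exists>\<delta>>0. \<forall>(N::nat) (l::nat \<Rightarrow> real) (r::nat \<Rightarrow> real).
        (\<forall>i<N. lo \<le> l i \<and> l i \<le> r i \<and> r i \<le> hi) \<and>
        (\<forall>i<N. \<forall>j<N. i \<noteq> j \<longrightarrow> r i \<le> l j \<or> r j \<le> l i) \<and>
        (\<Sum>i<N. r i - l i) < \<delta>
        \<longrightarrow> (\<Sum>i<N. \<bar>f (r i) - f (l i)\<bar>) < \<epsilon>)"

text \<open>Membership of u in W^{m,1}([lo,hi]) (m \<ge> 1), witnessed by its derivatives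
  D 0 = u, D 1, ..., D (m-1) on [lo,hi] (one-sided at the end points),
  with D (m-1) absolutely continuous.\<close>
definition W_derivs :: "nat \<Rightarrow> real \<Rightarrow> real \<Rightarrow> (real \<Rightarrow> real) \<Rightarrow> (nat \<Rightarrow> real \<Rightarrow> real) \<Rightarrow> bool" where
  "W_derivs m lo hi u D \<longleftrightarrow>
     (\<forall>t\<in>{lo..hi}. D 0 t = u t) \<and>
     (\<forall>k. Suc k < m \<longrightarrow> (\<forall>t\<in>{lo..hi}. (D k has_real_derivative D (Suc k) t) (at t within {lo..hi}))) \<and>
     abs_cont_on lo hi (D (m - 1))"

definition W_space :: "nat \<Rightarrow> real \<Rightarrow> real \<Rightarrow> (real \<Rightarrow> real) set" where
  "W_space m lo hi = {u. \<exists>D. W_derivs m lo hi u D}"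

definition X_Neumann :: "nat \<Rightarrow> real \<Rightarrow> real \<Rightarrow> (real \<Rightarrow> real) set" where
  "X_Neumann m lo hi =
     {u. \<exists>D. W_derivs m lo hi u D \<and> (\<forall>k. 2*k+1 < m \<longrightarrow> D (2*k+1) lo = 0 \<and> D (2*k+1) hi = 0)}"

definition X_Periodic :: "nat \<Rightarrow> real \<Rightarrow> real \<Rightarrow> (real \<Rightarrow> real) set" where
  "X_Periodic m lo hi = {u. \<exists>D. W_derivs m lo hi u D \<and> (\<forall>k<m. D k lo = D k hi)}"

definition op_eq :: "nat \<Rightarrow> (nat \<Rightarrow> real \<Rightarrow> real) \<Rightarrow> real \<Rightarrow> real \<Rightarrow> (real \<Rightarrow> real) \<Rightarrow> (real \<Rightarrow> real) \<Rightarrow> bool" where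
  "op_eq m a lo hi u \<sigma> \<longleftrightarrow>
     (\<exists>D. W_derivs m lo hi u D \<and>
        (AE t in lebesgue_on {lo..hi}.
           \<exists>d. (D (m - 1) has_real_derivative d) (at t within {lo..hi}) \<and>
               d + (\<Sum>k<m. a k t * D k t) = \<sigma> t))"

definition nonresonant :: "nat \<Rightarrow> (nat \<Rightarrow> real \<Rightarrow> real) \<Rightarrow> real \<Rightarrow> real \<Rightarrow> (real \<Rightarrow> real) set \<Rightarrow> bool" where
  "nonresonant m a lo hi X \<longleftrightarrow>
     (\<forall>u. u \<in> X \<and> op_eq m a lo hi u (\<lambda>_. 0) \<longrightarrow> (\<forall>t\<in>{lo..hi}. u t = 0))"

definition is_green :: "nat \<Rightarrow> (nat \<Rightarrow> real \<Rightarrow> real) \<Rightarrow> real \<Rightarrow> real \<Rightarrow> (real \<Rightarrow> real) set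
                         \<Rightarrow> (real \<Rightarrow> real \<Rightarrow> real) \<Rightarrow> bool" where
  "is_green m a lo hi X G \<longleftrightarrow>
     nonresonant m a lo hi X \<and>
     continuous_on ({lo..hi} \<times> {lo..hi}) (\<lambda>(t, s). G t s) \<and>
     (\<forall>\<sigma>. integrable (lebesgue_on {lo..hi}) \<sigma> \<longrightarrow>
        (\<forall>u. (u \<in> X \<and> op_eq m a lo hi u \<sigma>) \<longleftrightarrow>
             (\<forall>t\<in>{lo..hi}. u t = (LINT s|lebesgue_on {lo..hi}. G t s * \<sigma> s))))"

definition Lp_on :: "real \<Rightarrow> real set \<Rightarrow> (real \<Rightarrow> real) \<Rightarrow> bool" where
  "Lp_on p S f \<longleftrightarrow> f \<in> borel_measurable (lebesgue_on S) \<and>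
                   integrable (lebesgue_on S) (\<lambda>t. \<bar>f t\<bar> powr p)"

definition refl_ext :: "real \<Rightarrow> (nat \<Rightarrow> real \<Rightarrow> real) \<Rightarrow> nat \<Rightarrow> real \<Rightarrow> real" where
  "refl_ext T a k t =
     (if t \<le> T then a k t
      else if even k then a k (2*T - t) else - a k (2*T - t))"

end

theory Submission
  imports Defs
begin


definition ivs :: "real \<Rightarrow> real \<Rightarrow> nat \<Rightarrow> (nat \<Rightarrow> real) \<Rightarrow> (nat \<Rightarrow> real) \<Rightarrow> bool" where
  "ivs lo hi N l r \<longleftrightarrow> (\<forall>i<N. lo \<le> l i \<and> l i \<le> r i \<and> r i \<le> hi) \<and>
        (\<forall>i<N. \<forall>j<N. i \<noteq> j \<longrightarrow> r i \<le> l j \<or> r j \<le> l i)"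

lemma abs_cont_on_alt: "abs_cont_on lo hi f \<longleftrightarrow>
  (\<forall>e>0. \<exists>d>0. \<forall>N l r. ivs lo hi N l r \<and> (\<Sum>i<N. r i - l i) < d \<longrightarrow> (\<Sum>i<N. \<bar>f (r i) - f (l i)\<bar>) < e)"
  unfolding abs_cont_on_def ivs_def by simp

lemma abs_cont_onD:
  assumes "abs_cont_on lo hi f" "e > 0"
  obtains d where "d > 0" "\<And>N l r. ivs lo hi N l r \<Longrightarrow> (\<Sum>i<N. r i - l i) < d \<Longrightarrow> (\<Sum>i<N. \<bar>f (r i) - f (l i)\<bar>) < e"
  using assms unfolding abs_cont_on_alt by metis

lemma abs_cont_onI:
  assumes "\<And>e. e > 0 \<Longrightarrow> \<exists>d>0. \<forall>N l r. ivs lo hi N l r \<and> (\<Sum>i<N. r i - l i) < d \<longrightarrow> (\<Sum>i<N. \<bar>f (r i) - f (l i)\<bar>) < e"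
  shows "abs_cont_on lo hi f"
  unfolding abs_cont_on_alt using assms by blast

lemma abs_cont_transl:
  assumes f: "abs_cont_on 0 L f" and map: "\<forall>t\<in>{0..T}. c + t \<in> {0..L}" and k: "\<bar>\<kappa>\<bar> = 1"
  shows "abs_cont_on 0 T (\<lambda>t. \<kappa> * f (c + t))"
proof (rule abs_cont_onI)
  fix e :: real assume "e > 0"
  then obtain d where d: "d > 0" and H: "\<And>N l r. ivs 0 L N l r \<Longrightarrow> (\<Sum>i<N. r i - l i) < d \<Longrightarrow> (\<Sum>i<N. \<bar>f (r i) - f (l i)\<bar>) < e"
    using abs_cont_onD[OF f] by blast
  show "\<exists>d>0. \<forall>N l r. ivs 0 T N l r \<and> (\<Sum>i<N. r i - l i) < d \<longrightarrow> (\<Sum>i<N. \<bar>\<kappa> * f (c + r i) - \<kappa> * f (c + l i)\<bar>) < e"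
  proof (intro exI[of _ d] conjI d allI impI)
    fix N :: nat and l r :: "nat \<Rightarrow> real"
    assume a: "ivs 0 T N l r \<and> (\<Sum>i<N. r i - l i) < d"
    have 1: "ivs 0 L N (\<lambda>i. c + l i) (\<lambda>i. c + r i)"
      unfolding ivs_def
    proof (rule conjI; intro allI impI)
      fix i assume "i < N"
      then have "l i \<in> {0..T}" "r i \<in> {0..T}" "l i \<le> r i" using a by (auto simp: ivs_def)
      then show "0 \<le> c + l i \<and> c + l i \<le> c + r i \<and> c + r i \<le> L" using map by fastforce
    next
      fix i j assume "i < N" "j < N" "i \<noteq> j"
      then show "c + r i \<le> c + l j \<or> c + r j \<le> c + l i" using a by (auto simp: ivs_def)
    qed
    have 3: "(\<Sum>i<N. (c + r i) - (c + l i)) < d" using a by simp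
    have "(\<Sum>i<N. \<bar>f (c + r i) - f (c + l i)\<bar>) < e"
      using H[OF 1 3] .
    moreover have "\<And>i. \<bar>\<kappa> * f (c + r i) - \<kappa> * f (c + l i)\<bar> = \<bar>f (c + r i) - f (c + l i)\<bar>"
      using k by (simp add: right_diff_distrib[symmetric] abs_mult)
    ultimately show "(\<Sum>i<N. \<bar>\<kappa> * f (c + r i) - \<kappa> * f (c + l i)\<bar>) < e" by simp
  qed
qed

lemma abs_cont_refl:
  assumes f: "abs_cont_on 0 L f" and map: "\<forall>t\<in>{0..T}. c - t \<in> {0..L}" and k: "\<bar>\<kappa>\<bar> = 1"
  shows "abs_cont_on 0 T (\<lambda>t. \<kappa> * f (c - t))"
proof (rule abs_cont_onI)
  fix e :: real assume "e > 0"
  then obtain d where d: "d > 0" and H: "\<And>N l r. ivs 0 L N l r \<Longrightarrow> (\<Sum>i<N. r i - l i) < d \<Longrightarrow> (\<Sum>i<N. \<bar>f (r i) - f (l i)\<bar>) < e"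
    using abs_cont_onD[OF f] by blast
  show "\<exists>d>0. \<forall>N l r. ivs 0 T N l r \<and> (\<Sum>i<N. r i - l i) < d \<longrightarrow> (\<Sum>i<N. \<bar>\<kappa> * f (c - r i) - \<kappa> * f (c - l i)\<bar>) < e"
  proof (intro exI[of _ d] conjI d allI impI)
    fix N :: nat and l r :: "nat \<Rightarrow> real"
    assume a: "ivs 0 T N l r \<and> (\<Sum>i<N. r i - l i) < d"
    have 1: "ivs 0 L N (\<lambda>i. c - r i) (\<lambda>i. c - l i)"
      unfolding ivs_def
    proof (rule conjI; intro allI impI)
      fix i assume "i < N"
      then have "l i \<in> {0..T}" "r i \<in> {0..T}" "l i \<le> r i" using a by (auto simp: ivs_def)
      then show "0 \<le> c - r i \<and> c - r i \<le> c - l i \<and> c - l i \<le> L" using map by fastforce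
    next
      fix i j assume "i < N" "j < N" "i \<noteq> j"
      then show "c - l i \<le> c - r j \<or> c - l j \<le> c - r i" using a by (auto simp: ivs_def)
    qed
    have 3: "(\<Sum>i<N. (c - l i) - (c - r i)) < d" using a by simp
    have "(\<Sum>i<N. \<bar>f (c - l i) - f (c - r i)\<bar>) < e"
      using H[OF 1 3] .
    moreover have "\<And>i. \<bar>\<kappa> * f (c - r i) - \<kappa> * f (c - l i)\<bar> = \<bar>f (c - l i) - f (c - r i)\<bar>"
      using k by (simp add: right_diff_distrib[symmetric] abs_mult abs_minus_commute)
    ultimately show "(\<Sum>i<N. \<bar>\<kappa> * f (c - r i) - \<kappa> * f (c - l i)\<bar>) < e" by simp
  qed
qed

lemma abs_cont_affine:
  assumes f: "abs_cont_on 0 L f" and e: "\<epsilon> = 1 \<or> \<epsilon> = -1"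
    and map: "\<forall>t\<in>{0..T}. c + \<epsilon> * t \<in> {0..L}" and k: "\<bar>\<kappa>\<bar> = 1"
  shows "abs_cont_on 0 T (\<lambda>t. \<kappa> * f (c + \<epsilon> * t))"
  using e
proof
  assume "\<epsilon> = 1" then show ?thesis using abs_cont_transl[OF f _ k, of T c] map by simp
next
  assume "\<epsilon> = -1" then show ?thesis using abs_cont_refl[OF f _ k, of T c] map by simp
qed

lemma abs_cont_add:
  assumes f: "abs_cont_on lo hi f" and g: "abs_cont_on lo hi g"
  shows "abs_cont_on lo hi (\<lambda>t. f t + g t)"
proof (rule abs_cont_onI)
  fix e :: real assume e: "e > 0"
  then have e2: "e/2 > 0" by simp
  obtain d1 where d1: "d1 > 0" and H1: "\<And>N l r. ivs lo hi N l r \<Longrightarrow> (\<Sum>i<N. r i - l i) < d1 \<Longrightarrow> (\<Sum>i<N. \<bar>f (r i) - f (l i)\<bar>) < e/2"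
    using abs_cont_onD[OF f e2] by blast
  obtain d2 where d2: "d2 > 0" and H2: "\<And>N l r. ivs lo hi N l r \<Longrightarrow> (\<Sum>i<N. r i - l i) < d2 \<Longrightarrow> (\<Sum>i<N. \<bar>g (r i) - g (l i)\<bar>) < e/2"
    using abs_cont_onD[OF g e2] by blast
  show "\<exists>d>0. \<forall>N l r. ivs lo hi N l r \<and> (\<Sum>i<N. r i - l i) < d \<longrightarrow> (\<Sum>i<N. \<bar>(f (r i) + g (r i)) - (f (l i) + g (l i))\<bar>) < e"
  proof (intro exI[of _ "min d1 d2"] conjI allI impI)
    show "min d1 d2 > 0" using d1 d2 by simp
    fix N :: nat and l r :: "nat \<Rightarrow> real"
    assume a: "ivs lo hi N l r \<and> (\<Sum>i<N. r i - l i) < min d1 d2"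
    have "(\<Sum>i<N. \<bar>f (r i) - f (l i)\<bar>) < e/2" using H1 a by simp
    moreover have "(\<Sum>i<N. \<bar>g (r i) - g (l i)\<bar>) < e/2" using H2 a by simp
    moreover have "(\<Sum>i<N. \<bar>(f (r i) + g (r i)) - (f (l i) + g (l i))\<bar>)
       \<le> (\<Sum>i<N. \<bar>f (r i) - f (l i)\<bar> + \<bar>g (r i) - g (l i)\<bar>)"
      by (intro sum_mono) linarith
    ultimately show "(\<Sum>i<N. \<bar>(f (r i) + g (r i)) - (f (l i) + g (l i))\<bar>) < e"
      by (simp add: sum.distrib)
  qed
qed



lemma eps_sq: "\<epsilon> = 1 \<or> \<epsilon> = -1 \<Longrightarrow> \<epsilon> * \<epsilon> = (1::real)" by auto
lemma eps_pow_abs: "\<epsilon> = 1 \<or> \<epsilon> = -1 \<Longrightarrow> \<bar>\<epsilon> ^ k\<bar> = (1::real)" by (auto simp: power_abs)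

lemma W_derivs_affine:
  assumes W: "W_derivs m 0 L u D" and e: "\<epsilon> = 1 \<or> \<epsilon> = -1" and map: "\<forall>t\<in>{0..T}. c + \<epsilon>*t \<in> {0..L}"
  shows "W_derivs m 0 T (\<lambda>t. u (c + \<epsilon>*t)) (\<lambda>k t. \<epsilon>^k * D k (c + \<epsilon>*t))"
  unfolding W_derivs_def
proof (intro conjI)
  show "\<forall>t\<in>{0..T}. \<epsilon> ^ 0 * D 0 (c + \<epsilon> * t) = u (c + \<epsilon> * t)"
    using W map unfolding W_derivs_def by simp
  show "\<forall>k. Suc k < m \<longrightarrow> (\<forall>t\<in>{0..T}. ((\<lambda>t. \<epsilon> ^ k * D k (c + \<epsilon> * t)) has_real_derivative
          \<epsilon> ^ Suc k * D (Suc k) (c + \<epsilon> * t)) (at t within {0..T}))"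
  proof (intro allI impI ballI)
    fix k t assume k: "Suc k < m" and t: "t \<in> {0..T}"
    let ?g = "\<lambda>t. c + \<epsilon> * t"
    have "(D k has_real_derivative D (Suc k) (?g t)) (at (?g t) within {0..L})"
      using W k t map unfolding W_derivs_def by blast
    then have d1: "(D k has_real_derivative D (Suc k) (?g t)) (at (?g t) within ?g ` {0..T})"
      by (rule DERIV_subset) (use map in auto)
    have d2: "(?g has_real_derivative \<epsilon>) (at t within {0..T})"
      by (auto intro!: derivative_eq_intros)
    have "((D k \<circ> ?g) has_real_derivative D (Suc k) (?g t) * \<epsilon>) (at t within {0..T})"
      using DERIV_image_chain[OF d1 d2] .
    then have "((\<lambda>t. \<epsilon> ^ k * (D k \<circ> ?g) t) has_real_derivative \<epsilon> ^ k * (D (Suc k) (?g t) * \<epsilon>)) (at t within {0..T})"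
      by (rule DERIV_cmult)
    then show "((\<lambda>t. \<epsilon> ^ k * D k (c + \<epsilon> * t)) has_real_derivative
          \<epsilon> ^ Suc k * D (Suc k) (c + \<epsilon> * t)) (at t within {0..T})"
      by (simp add: o_def mult_ac)
  qed
  show "abs_cont_on 0 T (\<lambda>t. \<epsilon> ^ (m - 1) * D (m - 1) (c + \<epsilon> * t))"
    using abs_cont_affine[OF _ e map eps_pow_abs[OF e]] W unfolding W_derivs_def by blast
qed

lemma W_derivs_add:
  assumes "W_derivs m lo hi u D1" "W_derivs m lo hi v D2"
  shows "W_derivs m lo hi (\<lambda>t. u t + v t) (\<lambda>k t. D1 k t + D2 k t)"
  using assms unfolding W_derivs_def
  by (auto intro!: DERIV_add abs_cont_add)

lemma AE_affine:
  fixes L T c \<epsilon> :: real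
  assumes AE: "AE x in lebesgue_on {0..L}. P x" and e: "\<epsilon> = 1 \<or> \<epsilon> = -1"
    and map: "\<forall>t\<in>{0..T}. c + \<epsilon>*t \<in> {0..L}"
  shows "AE t in lebesgue_on {0..T}. P (c + \<epsilon>*t)"
proof -
  have "AE x in lebesgue. x \<in> {0..L} \<longrightarrow> P x"
    using AE by (subst (asm) AE_restrict_space_iff) auto
  then obtain N where N: "N \<in> null_sets lebesgue" "{x. \<not> (x \<in> {0..L} \<longrightarrow> P x)} \<subseteq> N"
    unfolding eventually_ae_filter by auto
  define g where "g y = \<epsilon> * (y - c)" for y
  have "negligible (g ` N)"
  proof (rule negligible_locally_Lipschitz_image)
    show "negligible N" using N negligible_iff_null_sets by blast
    fix x assume "x \<in> N"
    show "\<exists>T B. open T \<and> x \<in> T \<and> (\<forall>y\<in>N \<inter> T. norm (g y - g x) \<le> B * norm (y - x))"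
    proof (intro exI[of _ UNIV] exI[of _ 1] conjI ballI)
      fix y
      have "g y - g x = \<epsilon> * (y - x)" by (simp add: g_def algebra_simps)
      then show "norm (g y - g x) \<le> 1 * norm (y - x)" using e by (auto simp: abs_mult)
    qed auto
  qed auto
  then have NN: "g ` N \<in> null_sets lebesgue" using negligible_iff_null_sets by blast
  have "{t. \<not> (t \<in> {0..T} \<longrightarrow> P (c + \<epsilon>*t))} \<subseteq> g ` N"
  proof
    fix t assume t: "t \<in> {t. \<not> (t \<in> {0..T} \<longrightarrow> P (c + \<epsilon>*t))}"
    then have "c + \<epsilon>*t \<in> N" using N map by auto
    moreover have "g (c + \<epsilon>*t) = t" using e by (auto simp: g_def)
    ultimately show "t \<in> g ` N" by (metis image_eqI)
  qed
  then have "AE t in lebesgue. t \<in> {0..T} \<longrightarrow> P (c + \<epsilon>*t)"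
    unfolding eventually_ae_filter using NN by auto
  then show ?thesis by (subst AE_restrict_space_iff) auto
qed

lemma AE_interior: "AE t in lebesgue_on {lo..hi}. lo < t \<and> t < (hi::real)"
proof -
  have "{lo, hi} \<in> null_sets lebesgue" using negligible_iff_null_sets negligible_finite by blast
  then have "AE t in lebesgue. t \<in> {lo..hi} \<longrightarrow> lo < t \<and> t < hi"
    unfolding eventually_ae_filter by (intro bexI[of _ "{lo,hi}"]) auto
  then show ?thesis by (subst AE_restrict_space_iff) auto
qed



lemma eps_even_pow: "\<epsilon> = 1 \<or> \<epsilon> = -1 \<Longrightarrow> even m \<Longrightarrow> \<epsilon> ^ m = (1::real)"
  by (auto simp: power_minus1_even)

lemma op_eq_affine:
  fixes L T c \<epsilon> :: real
  assumes op: "op_eq m b 0 L u \<sigma>" and ev: "even m" and m1: "m \<ge> 1" and e: "\<epsilon> = 1 \<or> \<epsilon> = -1"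
    and map: "\<forall>t\<in>{0..T}. c + \<epsilon>*t \<in> {0..L}"
    and coef: "\<forall>t. 0 < t \<and> t < T \<longrightarrow> (\<forall>k<m. b k (c + \<epsilon>*t) = \<epsilon>^k * a k t)"
  shows "op_eq m a 0 T (\<lambda>t. u (c + \<epsilon>*t)) (\<lambda>t. \<sigma> (c + \<epsilon>*t))"
proof -
  obtain D where W: "W_derivs m 0 L u D" and AEq: "AE t in lebesgue_on {0..L}. \<exists>d. (D (m-1) has_real_derivative d) (at t within {0..L}) \<and> d + (\<Sum>k<m. b k t * D k t) = \<sigma> t"
    using op unfolding op_eq_def by blast
  have W': "W_derivs m 0 T (\<lambda>t. u (c + \<epsilon>*t)) (\<lambda>k t. \<epsilon>^k * D k (c + \<epsilon>*t))"
    using W_derivs_affine[OF W e map] .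
  have AE1: "AE t in lebesgue_on {0..T}. \<exists>d. (D (m-1) has_real_derivative d) (at (c+\<epsilon>*t) within {0..L}) \<and> d + (\<Sum>k<m. b k (c+\<epsilon>*t) * D k (c+\<epsilon>*t)) = \<sigma> (c+\<epsilon>*t)"
    using AE_affine[OF AEq e map] .
  have "AE t in lebesgue_on {0..T}. \<exists>d. ((\<lambda>t. \<epsilon>^(m-1) * D (m-1) (c+\<epsilon>*t)) has_real_derivative d) (at t within {0..T}) \<and> d + (\<Sum>k<m. a k t * (\<epsilon>^k * D k (c+\<epsilon>*t))) = \<sigma> (c+\<epsilon>*t)"
    using AE1 AE_interior[of 0 T]
  proof eventually_elim
    case (elim t)
    then obtain d where d: "(D (m-1) has_real_derivative d) (at (c+\<epsilon>*t) within {0..L})"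
      and eq: "d + (\<Sum>k<m. b k (c+\<epsilon>*t) * D k (c+\<epsilon>*t)) = \<sigma> (c+\<epsilon>*t)" by blast
    let ?g = "\<lambda>t. c + \<epsilon> * t"
    have d1: "(D (m-1) has_real_derivative d) (at (?g t) within ?g ` {0..T})"
      by (rule DERIV_subset[OF d]) (use map in auto)
    have d2: "(?g has_real_derivative \<epsilon>) (at t within {0..T})"
      by (auto intro!: derivative_eq_intros)
    have "((D (m-1) \<circ> ?g) has_real_derivative d * \<epsilon>) (at t within {0..T})"
      using DERIV_image_chain[OF d1 d2] .
    then have "((\<lambda>t. \<epsilon> ^ (m-1) * (D (m-1) \<circ> ?g) t) has_real_derivative \<epsilon> ^ (m-1) * (d * \<epsilon>)) (at t within {0..T})"
      by (rule DERIV_cmult)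
    moreover have "\<epsilon> ^ (m-1) * (d * \<epsilon>) = d"
    proof -
      have "\<epsilon> ^ (m-1) * (d * \<epsilon>) = \<epsilon> ^ (Suc (m-1)) * d" by (simp add: mult_ac)
      also have "Suc (m-1) = m" using m1 by simp
      finally show ?thesis using eps_even_pow[OF e ev] by simp
    qed
    ultimately have D: "((\<lambda>t. \<epsilon>^(m-1) * D (m-1) (c+\<epsilon>*t)) has_real_derivative d) (at t within {0..T})"
      unfolding o_def by metis
    have "(\<Sum>k<m. a k t * (\<epsilon>^k * D k (c+\<epsilon>*t))) = (\<Sum>k<m. b k (c+\<epsilon>*t) * D k (c+\<epsilon>*t))"
      using coef elim by (intro sum.cong) (auto simp: mult_ac)
    then show ?case using D eq by auto
  qed
  then show ?thesis unfolding op_eq_def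
    by (intro exI[of _ "\<lambda>k t. \<epsilon>^k * D k (c + \<epsilon>*t)"] conjI W') simp
qed

lemma op_eq_add:
  assumes "op_eq m a lo hi u1 \<sigma>1" "op_eq m a lo hi u2 \<sigma>2"
  shows "op_eq m a lo hi (\<lambda>t. u1 t + u2 t) (\<lambda>t. \<sigma>1 t + \<sigma>2 t)"
proof -
  obtain D1 where W1: "W_derivs m lo hi u1 D1" and A1: "AE t in lebesgue_on {lo..hi}. \<exists>d. (D1 (m-1) has_real_derivative d) (at t within {lo..hi}) \<and> d + (\<Sum>k<m. a k t * D1 k t) = \<sigma>1 t"
    using assms(1) unfolding op_eq_def by blast
  obtain D2 where W2: "W_derivs m lo hi u2 D2" and A2: "AE t in lebesgue_on {lo..hi}. \<exists>d. (D2 (m-1) has_real_derivative d) (at t within {lo..hi}) \<and> d + (\<Sum>k<m. a k t * D2 k t) = \<sigma>2 t"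
    using assms(2) unfolding op_eq_def by blast
  have "AE t in lebesgue_on {lo..hi}. \<exists>d. ((\<lambda>t. D1 (m-1) t + D2 (m-1) t) has_real_derivative d) (at t within {lo..hi}) \<and> d + (\<Sum>k<m. a k t * (D1 k t + D2 k t)) = \<sigma>1 t + \<sigma>2 t"
    using A1 A2
  proof eventually_elim
    case (elim t)
    then obtain d1 d2 where "(D1 (m-1) has_real_derivative d1) (at t within {lo..hi})" "d1 + (\<Sum>k<m. a k t * D1 k t) = \<sigma>1 t"
      "(D2 (m-1) has_real_derivative d2) (at t within {lo..hi})" "d2 + (\<Sum>k<m. a k t * D2 k t) = \<sigma>2 t" by blast
    then show ?case
      by (intro exI[of _ "d1 + d2"] conjI DERIV_add) (auto simp: distrib_left sum.distrib)
  qed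
  then show ?thesis unfolding op_eq_def
    by (intro exI[of _ "\<lambda>k t. D1 k t + D2 k t"] conjI W_derivs_add[OF W1 W2])
qed

lemma op_eq_cong:
  assumes "op_eq m a lo hi u \<sigma>" "AE t in lebesgue_on {lo..hi}. \<sigma> t = \<sigma>' t"
  shows "op_eq m a lo hi u \<sigma>'"
proof -
  obtain D where W: "W_derivs m lo hi u D" and A: "AE t in lebesgue_on {lo..hi}. \<exists>d. (D (m-1) has_real_derivative d) (at t within {lo..hi}) \<and> d + (\<Sum>k<m. a k t * D k t) = \<sigma> t"
    using assms(1) unfolding op_eq_def by blast
  have "AE t in lebesgue_on {lo..hi}. \<exists>d. (D (m-1) has_real_derivative d) (at t within {lo..hi}) \<and> d + (\<Sum>k<m. a k t * D k t) = \<sigma>' t"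
    using A assms(2) by eventually_elim auto
  then show ?thesis unfolding op_eq_def using W by blast
qed



definition ext0 :: "real \<Rightarrow> (real \<Rightarrow> real) \<Rightarrow> real \<Rightarrow> real" where
  "ext0 T \<sigma> s = (if s \<in> {0..T} then \<sigma> s else 0)"

lemma integrable_ext0:
  fixes T L :: real
  assumes "integrable (lebesgue_on {0..T}) \<sigma>" "T \<le> L"
  shows "integrable (lebesgue_on {0..L}) (ext0 T \<sigma>)"
proof -
  have eq: "(\<lambda>x. indicator {0..L} x * ext0 T \<sigma> x) = (\<lambda>x. indicator {0..T} x * \<sigma> x)"
    using assms(2) by (auto simp: ext0_def indicator_def)
  show ?thesis using assms(1)
    by (subst integrable_restrict_space) (auto simp: eq integrable_restrict_space)
qed

lemma integral_ext0:
  fixes T L :: real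
  assumes "T \<le> L"
  shows "(LINT s|lebesgue_on {0..L}. f s * ext0 T \<sigma> s) = (LINT s|lebesgue_on {0..T}. f s * \<sigma> s)"
proof -
  have eq: "(\<lambda>x. indicator {0..L} x * (f x * ext0 T \<sigma> x)) = (\<lambda>x. indicator {0..T} x * (f x * \<sigma> x))"
    using assms by (auto simp: ext0_def indicator_def)
  show ?thesis
    by (subst (1 2) integral_restrict_space) (auto simp: eq)
qed

lemma cont_slice:
  fixes L T t :: real
  assumes "continuous_on ({0..L}\<times>{0..L}) (\<lambda>(t,s). G t s)" "t \<in> {0..L}" "T \<le> L"
  shows "continuous_on {0..T} (\<lambda>s. G t s)"
proof -
  have "continuous_on {0..T} (\<lambda>s. (\<lambda>(t,s). G t s) (t, s))"
    by (rule continuous_on_compose2[OF assms(1)]) (use assms in \<open>auto intro!: continuous_intros\<close>)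
  then show ?thesis by simp
qed

lemma final_step:
  fixes T :: real
  assumes GN: "is_green m a 0 T (X_Neumann m 0 T) GN" and T: "T > 0"
    and Hc: "\<forall>t\<in>{0..T}. continuous_on {0..T} (H t)"
    and key: "\<And>\<sigma>. continuous_on {0..T} \<sigma> \<Longrightarrow> \<exists>v. v \<in> X_Neumann m 0 T \<and> op_eq m a 0 T v \<sigma> \<and>
                 (\<forall>t\<in>{0..T}. v t = (LINT s|lebesgue_on {0..T}. H t s * \<sigma> s))"
  shows "\<forall>t\<in>{0..T}. \<forall>s\<in>{0..T}. GN t s = H t s"
proof (intro ballI)
  fix t0 s0 assume t0: "t0 \<in> {0..T}" and s0: "s0 \<in> {0..T}"
  have cG: "continuous_on {0..T} (\<lambda>s. GN t0 s)"
    using cont_slice[of T GN t0 T] GN t0 unfolding is_green_def by auto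
  have cH: "continuous_on {0..T} (H t0)" using Hc t0 by blast
  define \<sigma> where "\<sigma> s = GN t0 s - H t0 s" for s
  have c\<sigma>: "continuous_on {0..T} \<sigma>" unfolding \<sigma>_def using cG cH by (auto intro!: continuous_intros)
  obtain v where v: "v \<in> X_Neumann m 0 T" "op_eq m a 0 T v \<sigma>"
      "\<forall>t\<in>{0..T}. v t = (LINT s|lebesgue_on {0..T}. H t s * \<sigma> s)"
    using key[OF c\<sigma>] by blast
  have i\<sigma>: "integrable (lebesgue_on {0..T}) \<sigma>" using c\<sigma> by (rule continuous_imp_integrable_real)
  have "\<forall>t\<in>{0..T}. v t = (LINT s|lebesgue_on {0..T}. GN t s * \<sigma> s)"
    using GN i\<sigma> v unfolding is_green_def by blast
  then have eq: "(LINT s|lebesgue_on {0..T}. GN t0 s * \<sigma> s) = (LINT s|lebesgue_on {0..T}. H t0 s * \<sigma> s)"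
    using v(3) t0 by metis
  have i1: "integrable (lebesgue_on {0..T}) (\<lambda>s. GN t0 s * \<sigma> s)"
    by (rule continuous_imp_integrable_real) (use cG c\<sigma> in \<open>auto intro!: continuous_intros\<close>)
  have i2: "integrable (lebesgue_on {0..T}) (\<lambda>s. H t0 s * \<sigma> s)"
    by (rule continuous_imp_integrable_real) (use cH c\<sigma> in \<open>auto intro!: continuous_intros\<close>)
  have "(LINT s|lebesgue_on {0..T}. \<sigma> s * \<sigma> s) = (LINT s|lebesgue_on {0..T}. GN t0 s * \<sigma> s - H t0 s * \<sigma> s)"
    by (simp add: \<sigma>_def algebra_simps)
  also have "\<dots> = 0" using Bochner_Integration.integral_diff[OF i1 i2] eq by simp
  finally have z: "(LINT s|lebesgue_on {0..T}. \<sigma> s * \<sigma> s) = 0" .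
  have c2: "continuous_on {0..T} (\<lambda>s. \<sigma> s * \<sigma> s)" using c\<sigma> by (auto intro!: continuous_intros)
  have "integral {0..T} (\<lambda>s. \<sigma> s * \<sigma> s) = 0"
    using z lebesgue_integral_eq_integral[OF continuous_imp_integrable_real[OF c2]] by simp
  then have "\<forall>x\<in>cbox 0 T. \<sigma> x * \<sigma> x = 0"
    using integral_cbox_eq_0_iff[of 0 T "\<lambda>s. \<sigma> s * \<sigma> s"] c2 T by (simp add: cbox_interval)
  then have "\<sigma> s0 = 0" using s0 by (simp add: cbox_interval)
  then show "GN t0 s0 = H t0 s0" by (simp add: \<sigma>_def)
qed



lemma int_sum2:
  fixes T :: real and f g \<sigma> :: "real \<Rightarrow> real"
  assumes "continuous_on {0..T} f" "continuous_on {0..T} g" "continuous_on {0..T} \<sigma>"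
  shows "(LINT s|lebesgue_on {0..T}. f s * \<sigma> s) + (LINT s|lebesgue_on {0..T}. g s * \<sigma> s)
       = (LINT s|lebesgue_on {0..T}. (f s + g s) * \<sigma> s)"
proof -
  have i1: "integrable (lebesgue_on {0..T}) (\<lambda>s. f s * \<sigma> s)"
    by (rule continuous_imp_integrable_real) (use assms in \<open>auto intro!: continuous_intros\<close>)
  have i2: "integrable (lebesgue_on {0..T}) (\<lambda>s. g s * \<sigma> s)"
    by (rule continuous_imp_integrable_real) (use assms in \<open>auto intro!: continuous_intros\<close>)
  show ?thesis using Bochner_Integration.integral_add[OF i1 i2] by (simp add: distrib_right)
qed

lemma part1:
  fixes T :: real
  assumes ev: "even m" and m1: "m \<ge> 1" and T: "T > 0"
    and GN: "is_green m a 0 T (X_Neumann m 0 T) GN"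
    and GP: "is_green m (refl_ext T a) 0 (2*T) (X_Periodic m 0 (2*T)) GP"
  shows "\<forall>t\<in>{0..T}. \<forall>s\<in>{0..T}. GN t s = GP t s + GP (2*T - t) s"
proof -
  have cGP: "continuous_on ({0..2*T}\<times>{0..2*T}) (\<lambda>(t,s). GP t s)" using GP is_green_def by blast
  have sl: "continuous_on {0..T} (\<lambda>s. GP x s)" if "x \<in> {0..2*T}" for x
    using cont_slice[OF cGP that] T by simp
  show ?thesis
  proof (rule final_step[OF GN T])
    show "\<forall>t\<in>{0..T}. continuous_on {0..T} (\<lambda>s. GP t s + GP (2*T - t) s)"
      using sl by (auto intro!: continuous_intros)
    fix \<sigma> :: "real \<Rightarrow> real" assume c\<sigma>: "continuous_on {0..T} \<sigma>"
    have i\<sigma>0: "integrable (lebesgue_on {0..2*T}) (ext0 T \<sigma>)"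
      using integrable_ext0[OF continuous_imp_integrable_real[OF c\<sigma>]] T by simp
    define w where "w = (\<lambda>t. LINT s|lebesgue_on {0..2*T}. GP t s * ext0 T \<sigma> s)"
    have "(w \<in> X_Periodic m 0 (2*T) \<and> op_eq m (refl_ext T a) 0 (2*T) w (ext0 T \<sigma>)) \<longleftrightarrow>
          (\<forall>t\<in>{0..2*T}. w t = (LINT s|lebesgue_on {0..2*T}. GP t s * ext0 T \<sigma> s))"
      using GP i\<sigma>0 unfolding is_green_def by blast
    then have wX: "w \<in> X_Periodic m 0 (2*T)" and wop: "op_eq m (refl_ext T a) 0 (2*T) w (ext0 T \<sigma>)"
      by (auto simp: w_def)
    have e1: "(1::real) = 1 \<or> (1::real) = -1" by simp
    have e2: "(-1::real) = 1 \<or> (-1::real) = -1" by simp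
    have map1: "\<forall>t\<in>{0..T}. 0 + 1*t \<in> {0..2*T}" using T by auto
    have map2: "\<forall>t\<in>{0..T}. 2*T + (-1)*t \<in> {0..2*T}" using T by auto
    define v where "v = (\<lambda>t. w (0 + 1*t) + w (2*T + (-1)*t))"
    have op1: "op_eq m a 0 T (\<lambda>t. w (0 + 1*t)) (\<lambda>t. ext0 T \<sigma> (0 + 1*t))"
      by (rule op_eq_affine[OF wop ev m1 e1 map1]) (simp add: refl_ext_def)
    have op2: "op_eq m a 0 T (\<lambda>t. w (2*T + (-1)*t)) (\<lambda>t. ext0 T \<sigma> (2*T + (-1)*t))"
      by (rule op_eq_affine[OF wop ev m1 e2 map2]) (auto simp: refl_ext_def minus_one_power_iff)
    have opv: "op_eq m a 0 T v \<sigma>"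
      unfolding v_def
      by (rule op_eq_cong[OF op_eq_add[OF op1 op2]], use AE_interior[of 0 T] in eventually_elim)
         (auto simp: ext0_def)
    obtain D where D: "W_derivs m 0 (2*T) w D" and per: "\<forall>k<m. D k 0 = D k (2*T)"
      using wX unfolding X_Periodic_def by blast
    have Wv: "W_derivs m 0 T v (\<lambda>k t. 1^k * D k (0 + 1*t) + (-1)^k * D k (2*T + (-1)*t))"
      unfolding v_def
      by (rule W_derivs_add[OF W_derivs_affine[OF D e1 map1] W_derivs_affine[OF D e2 map2]])
    have vX: "v \<in> X_Neumann m 0 T"
      unfolding X_Neumann_def
      by (rule CollectI, rule exI, rule conjI[OF Wv]) (use per in auto)
    have "\<forall>t\<in>{0..T}. v t = (LINT s|lebesgue_on {0..T}. (GP t s + GP (2*T - t) s) * \<sigma> s)"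
    proof
      fix t assume t: "t \<in> {0..T}"
      have "v t = (LINT s|lebesgue_on {0..T}. GP t s * \<sigma> s) + (LINT s|lebesgue_on {0..T}. GP (2*T - t) s * \<sigma> s)"
        using T by (simp add: v_def w_def integral_ext0)
      also have "\<dots> = (LINT s|lebesgue_on {0..T}. (GP t s + GP (2*T - t) s) * \<sigma> s)"
        by (rule int_sum2[OF _ _ c\<sigma>]) (use sl t T in auto)
      finally show "v t = (LINT s|lebesgue_on {0..T}. (GP t s + GP (2*T - t) s) * \<sigma> s)" .
    qed
    then show "\<exists>v. v \<in> X_Neumann m 0 T \<and> op_eq m a 0 T v \<sigma> \<and>
        (\<forall>t\<in>{0..T}. v t = (LINT s|lebesgue_on {0..T}. (GP t s + GP (2*T - t) s) * \<sigma> s))"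
      using vX opv by blast
  qed
qed



lemma part2:
  fixes T :: real
  assumes ev: "even m" and m1: "m \<ge> 1" and T: "T > 0"
    and GN: "is_green m a 0 T (X_Neumann m 0 T) GN"
    and GP: "is_green m (refl_ext T a) 0 (2*T) (X_Neumann m 0 (2*T)) GP"
  shows "\<forall>t\<in>{0..T}. \<forall>s\<in>{0..T}. GN t s = GP t s + GP (2*T - t) s"
proof -
  have cGP: "continuous_on ({0..2*T}\<times>{0..2*T}) (\<lambda>(t,s). GP t s)" using GP is_green_def by blast
  have sl: "continuous_on {0..T} (\<lambda>s. GP x s)" if "x \<in> {0..2*T}" for x
    using cont_slice[OF cGP that] T by simp
  show ?thesis
  proof (rule final_step[OF GN T])
    show "\<forall>t\<in>{0..T}. continuous_on {0..T} (\<lambda>s. GP t s + GP (2*T - t) s)"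
      using sl by (auto intro!: continuous_intros)
    fix \<sigma> :: "real \<Rightarrow> real" assume c\<sigma>: "continuous_on {0..T} \<sigma>"
    have i\<sigma>0: "integrable (lebesgue_on {0..2*T}) (ext0 T \<sigma>)"
      using integrable_ext0[OF continuous_imp_integrable_real[OF c\<sigma>]] T by simp
    define w where "w = (\<lambda>t. LINT s|lebesgue_on {0..2*T}. GP t s * ext0 T \<sigma> s)"
    have "(w \<in> X_Neumann m 0 (2*T) \<and> op_eq m (refl_ext T a) 0 (2*T) w (ext0 T \<sigma>)) \<longleftrightarrow>
          (\<forall>t\<in>{0..2*T}. w t = (LINT s|lebesgue_on {0..2*T}. GP t s * ext0 T \<sigma> s))"
      using GP i\<sigma>0 unfolding is_green_def by blast
    then have wX: "w \<in> X_Neumann m 0 (2*T)" and wop: "op_eq m (refl_ext T a) 0 (2*T) w (ext0 T \<sigma>)"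
      by (auto simp: w_def)
    have e1: "(1::real) = 1 \<or> (1::real) = -1" by simp
    have e2: "(-1::real) = 1 \<or> (-1::real) = -1" by simp
    have map1: "\<forall>t\<in>{0..T}. 0 + 1*t \<in> {0..2*T}" using T by auto
    have map2: "\<forall>t\<in>{0..T}. 2*T + (-1)*t \<in> {0..2*T}" using T by auto
    define v where "v = (\<lambda>t. w (0 + 1*t) + w (2*T + (-1)*t))"
    have op1: "op_eq m a 0 T (\<lambda>t. w (0 + 1*t)) (\<lambda>t. ext0 T \<sigma> (0 + 1*t))"
      by (rule op_eq_affine[OF wop ev m1 e1 map1]) (simp add: refl_ext_def)
    have op2: "op_eq m a 0 T (\<lambda>t. w (2*T + (-1)*t)) (\<lambda>t. ext0 T \<sigma> (2*T + (-1)*t))"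
      by (rule op_eq_affine[OF wop ev m1 e2 map2]) (auto simp: refl_ext_def minus_one_power_iff)
    have opv: "op_eq m a 0 T v \<sigma>"
      unfolding v_def
      by (rule op_eq_cong[OF op_eq_add[OF op1 op2]], use AE_interior[of 0 T] in eventually_elim)
         (auto simp: ext0_def)
    obtain D where D: "W_derivs m 0 (2*T) w D" and per: "\<forall>k. 2*k+1 < m \<longrightarrow> D (2*k+1) 0 = 0 \<and> D (2*k+1) (2*T) = 0"
      using wX unfolding X_Neumann_def by blast
    have Wv: "W_derivs m 0 T v (\<lambda>k t. 1^k * D k (0 + 1*t) + (-1)^k * D k (2*T + (-1)*t))"
      unfolding v_def
      by (rule W_derivs_add[OF W_derivs_affine[OF D e1 map1] W_derivs_affine[OF D e2 map2]])
    have vX: "v \<in> X_Neumann m 0 T"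
      unfolding X_Neumann_def
      by (rule CollectI, rule exI, rule conjI[OF Wv]) (use per in auto)
    have "\<forall>t\<in>{0..T}. v t = (LINT s|lebesgue_on {0..T}. (GP t s + GP (2*T - t) s) * \<sigma> s)"
    proof
      fix t assume t: "t \<in> {0..T}"
      have "v t = (LINT s|lebesgue_on {0..T}. GP t s * \<sigma> s) + (LINT s|lebesgue_on {0..T}. GP (2*T - t) s * \<sigma> s)"
        using T by (simp add: v_def w_def integral_ext0)
      also have "\<dots> = (LINT s|lebesgue_on {0..T}. (GP t s + GP (2*T - t) s) * \<sigma> s)"
        by (rule int_sum2[OF _ _ c\<sigma>]) (use sl t T in auto)
      finally show "v t = (LINT s|lebesgue_on {0..T}. (GP t s + GP (2*T - t) s) * \<sigma> s)" .
    qed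
    then show "\<exists>v. v \<in> X_Neumann m 0 T \<and> op_eq m a 0 T v \<sigma> \<and>
        (\<forall>t\<in>{0..T}. v t = (LINT s|lebesgue_on {0..T}. (GP t s + GP (2*T - t) s) * \<sigma> s))"
      using vX opv by blast
  qed
qed


lemma part3:
  fixes T :: real
  assumes ev: "even m" and m1: "m \<ge> 1" and T: "T > 0"
    and GN: "is_green m a 0 T (X_Neumann m 0 T) GN"
    and GP: "is_green m (refl_ext (2*T) (refl_ext T a)) 0 (4*T) (X_Periodic m 0 (4*T)) GP"
  shows "\<forall>t\<in>{0..T}. \<forall>s\<in>{0..T}. GN t s = GP t s + GP (4*T - t) s + GP (2*T - t) s + GP (2*T + t) s"
proof -
  have cGP: "continuous_on ({0..4*T}\<times>{0..4*T}) (\<lambda>(t,s). GP t s)" using GP is_green_def by blast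
  have sl: "continuous_on {0..T} (\<lambda>s. GP x s)" if "x \<in> {0..4*T}" for x
    using cont_slice[OF cGP that] T by simp
  show ?thesis
  proof (rule final_step[OF GN T])
    show "\<forall>t\<in>{0..T}. continuous_on {0..T} (\<lambda>s. GP t s + GP (4*T - t) s + GP (2*T - t) s + GP (2*T + t) s)"
      using sl T by (auto intro!: continuous_intros)
    fix \<sigma> :: "real \<Rightarrow> real" assume c\<sigma>: "continuous_on {0..T} \<sigma>"
    have i\<sigma>0: "integrable (lebesgue_on {0..4*T}) (ext0 T \<sigma>)"
      using integrable_ext0[OF continuous_imp_integrable_real[OF c\<sigma>]] T by simp
    define w where "w = (\<lambda>t. LINT s|lebesgue_on {0..4*T}. GP t s * ext0 T \<sigma> s)"
    have "(w \<in> X_Periodic m 0 (4*T) \<and> op_eq m (refl_ext (2*T) (refl_ext T a)) 0 (4*T) w (ext0 T \<sigma>)) \<longleftrightarrow>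
          (\<forall>t\<in>{0..4*T}. w t = (LINT s|lebesgue_on {0..4*T}. GP t s * ext0 T \<sigma> s))"
      using GP i\<sigma>0 unfolding is_green_def by blast
    then have wX: "w \<in> X_Periodic m 0 (4*T)" and wop: "op_eq m (refl_ext (2*T) (refl_ext T a)) 0 (4*T) w (ext0 T \<sigma>)"
      by (auto simp: w_def)
    have e1: "(1::real) = 1 \<or> (1::real) = -1" by simp
    have e2: "(-1::real) = 1 \<or> (-1::real) = -1" by simp
    have map1: "\<forall>t\<in>{0..T}. 0 + 1*t \<in> {0..4*T}" using T by auto
    have map2: "\<forall>t\<in>{0..T}. 4*T + (-1)*t \<in> {0..4*T}" using T by auto
    have map3: "\<forall>t\<in>{0..T}. 2*T + (-1)*t \<in> {0..4*T}" using T by auto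
    have map4: "\<forall>t\<in>{0..T}. 2*T + 1*t \<in> {0..4*T}" using T by auto
    define v where "v = (\<lambda>t. w (0 + 1*t) + w (4*T + (-1)*t) + w (2*T + (-1)*t) + w (2*T + 1*t))"
    have op1: "op_eq m a 0 T (\<lambda>t. w (0 + 1*t)) (\<lambda>t. ext0 T \<sigma> (0 + 1*t))"
      by (rule op_eq_affine[OF wop ev m1 e1 map1]) (auto simp: refl_ext_def)
    have op2: "op_eq m a 0 T (\<lambda>t. w (4*T + (-1)*t)) (\<lambda>t. ext0 T \<sigma> (4*T + (-1)*t))"
      by (rule op_eq_affine[OF wop ev m1 e2 map2]) (auto simp: refl_ext_def minus_one_power_iff)
    have op3: "op_eq m a 0 T (\<lambda>t. w (2*T + (-1)*t)) (\<lambda>t. ext0 T \<sigma> (2*T + (-1)*t))"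
      by (rule op_eq_affine[OF wop ev m1 e2 map3]) (auto simp: refl_ext_def minus_one_power_iff)
    have op4: "op_eq m a 0 T (\<lambda>t. w (2*T + 1*t)) (\<lambda>t. ext0 T \<sigma> (2*T + 1*t))"
      by (rule op_eq_affine[OF wop ev m1 e1 map4]) (auto simp: refl_ext_def)
    have opv: "op_eq m a 0 T v \<sigma>"
      unfolding v_def
      by (rule op_eq_cong[OF op_eq_add[OF op_eq_add[OF op_eq_add[OF op1 op2] op3] op4]], use AE_interior[of 0 T] in eventually_elim)
         (auto simp: ext0_def)
    obtain D where D: "W_derivs m 0 (4*T) w D" and per: "\<forall>k<m. D k 0 = D k (4*T)"
      using wX unfolding X_Periodic_def by blast
    have Wv: "W_derivs m 0 T v (\<lambda>k t. 1^k * D k (0 + 1*t) + (-1)^k * D k (4*T + (-1)*t) + (-1)^k * D k (2*T + (-1)*t) + 1^k * D k (2*T + 1*t))"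
      unfolding v_def
      by (rule W_derivs_add[OF W_derivs_add[OF W_derivs_add[OF W_derivs_affine[OF D e1 map1] W_derivs_affine[OF D e2 map2]] W_derivs_affine[OF D e2 map3]] W_derivs_affine[OF D e1 map4]])
    have T3: "4*T + (-1)*T = 2*T + 1*T" by simp
    have vX: "v \<in> X_Neumann m 0 T"
      unfolding X_Neumann_def
      by (rule CollectI, rule exI, rule conjI[OF Wv]) (use per T3 in auto)
    have "\<forall>t\<in>{0..T}. v t = (LINT s|lebesgue_on {0..T}. (GP t s + GP (4*T - t) s + GP (2*T - t) s + GP (2*T + t) s) * \<sigma> s)"
    proof
      fix t assume t: "t \<in> {0..T}"
      have "v t = (LINT s|lebesgue_on {0..T}. GP t s * \<sigma> s) + (LINT s|lebesgue_on {0..T}. GP (4*T - t) s * \<sigma> s)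
          + (LINT s|lebesgue_on {0..T}. GP (2*T - t) s * \<sigma> s) + (LINT s|lebesgue_on {0..T}. GP (2*T + t) s * \<sigma> s)"
        using T by (simp add: v_def w_def integral_ext0)
      also have "(LINT s|lebesgue_on {0..T}. GP t s * \<sigma> s) + (LINT s|lebesgue_on {0..T}. GP (4*T - t) s * \<sigma> s)
          = (LINT s|lebesgue_on {0..T}. (GP t s + GP (4*T - t) s) * \<sigma> s)"
        by (rule int_sum2[OF _ _ c\<sigma>]) (use sl t T in auto)
      also have "(LINT s|lebesgue_on {0..T}. (GP t s + GP (4*T - t) s) * \<sigma> s) + (LINT s|lebesgue_on {0..T}. GP (2*T - t) s * \<sigma> s)
          = (LINT s|lebesgue_on {0..T}. (GP t s + GP (4*T - t) s + GP (2*T - t) s) * \<sigma> s)"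
        by (rule int_sum2[OF _ _ c\<sigma>]) (use sl t T in \<open>auto intro!: continuous_intros\<close>)
      also have "(LINT s|lebesgue_on {0..T}. (GP t s + GP (4*T - t) s + GP (2*T - t) s) * \<sigma> s) + (LINT s|lebesgue_on {0..T}. GP (2*T + t) s * \<sigma> s)
          = (LINT s|lebesgue_on {0..T}. (GP t s + GP (4*T - t) s + GP (2*T - t) s + GP (2*T + t) s) * \<sigma> s)"
        by (rule int_sum2[OF _ _ c\<sigma>]) (use sl t T in \<open>auto intro!: continuous_intros\<close>)
      finally show "v t = (LINT s|lebesgue_on {0..T}. (GP t s + GP (4*T - t) s + GP (2*T - t) s + GP (2*T + t) s) * \<sigma> s)" .
    qed
    then show "\<exists>v. v \<in> X_Neumann m 0 T \<and> op_eq m a 0 T v \<sigma> \<and>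
        (\<forall>t\<in>{0..T}. v t = (LINT s|lebesgue_on {0..T}. (GP t s + GP (4*T - t) s + GP (2*T - t) s + GP (2*T + t) s) * \<sigma> s))"
      using vX opv by blast
  qed
qed

theorem mainTheorem2:
  fixes n :: nat and T \<alpha> :: real and a :: "nat \<Rightarrow> real \<Rightarrow> real"
    and GN GP2 GN2 GP4 :: "real \<Rightarrow> real \<Rightarrow> real"
  assumes "n \<ge> 1" and "T > 0" and "\<alpha> \<ge> 1"
    and "\<forall>k<2*n. Lp_on \<alpha> {0..T} (a k)"
  shows
    "(is_green (2*n) a 0 T (X_Neumann (2*n) 0 T) GN \<and>
      is_green (2*n) (refl_ext T a) 0 (2*T) (X_Periodic (2*n) 0 (2*T)) GP2
      \<longrightarrow> (\<forall>t\<in>{0..T}. \<forall>s\<in>{0..T}. GN t s = GP2 t s + GP2 (2*T - t) s))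
   \<and> (is_green (2*n) a 0 T (X_Neumann (2*n) 0 T) GN \<and>
      is_green (2*n) (refl_ext T a) 0 (2*T) (X_Neumann (2*n) 0 (2*T)) GN2
      \<longrightarrow> (\<forall>t\<in>{0..T}. \<forall>s\<in>{0..T}. GN t s = GN2 t s + GN2 (2*T - t) s))
   \<and> (is_green (2*n) a 0 T (X_Neumann (2*n) 0 T) GN \<and>
      is_green (2*n) (refl_ext (2*T) (refl_ext T a)) 0 (4*T) (X_Periodic (2*n) 0 (4*T)) GP4
      \<longrightarrow> (\<forall>t\<in>{0..T}. \<forall>s\<in>{0..T}.
             GN t s = GP4 t s + GP4 (4*T - t) s + GP4 (2*T - t) s + GP4 (2*T + t) s))"
  proof -
  have ev: "even (2*n)" by simp
  have m1: "2*n \<ge> 1" using assms(1) by simp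
  show ?thesis
    using part1[OF ev m1 assms(2)] part2[OF ev m1 assms(2)] part3[OF ev m1 assms(2)] by blast
qed

end
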